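(* Let $\Gamma$ be a finitely generated group and $H\le\Gamma$ an amenable subgroup. If for some finite symmetric generating set $S$ of $\Gamma$ the Schreier graph $\mathrm{Sch}(\Gamma,H,S)$ is extraterrestrial, then $\Gamma$ is extraterrestrial.
   Context: The (right) Schreier graph $\mathrm{Sch}(\Gamma,H,S)$ has vertex set the right cosets $\{Hg:g\in\Gamma\}$, with an edge between $Hg$ and $Hg'$ whenever $Hg'=Hgs$ for some $s\in S$. A graph $G=(V,E)$ (with shortest-path metric $d_G$) is extraterrestrial if for every $m\in\mathbb N$ there exists $k\in\mathbb N$ such that for every $r\in\mathbb N$ there exists an $(m,k,r)$-UFO: a triple $(U,F,O)$ of pairwise disjoint finite subsets of $V$ with $U\ne\emptyset$, $|U|\ge m|F|$, a bijection $\mu:U\to O$ with $d_G(u,\mu(u))\le k$ for all $u\in U$, and such that every path (sequence of distinct vertices, consecutive ones adjacent) from a vertex of $U$ to a vertex of $O$ either contains a vertex of $F$ or has length at least $r$. A finitely generated group is extraterrestrial if its Cayley graph $\mathrm{Cay}(\Gamma,S)$ (edges $\{g,gs\}$) is extraterrestrial for some (equivalently any) finite symmetric generating set $S$. *)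

theory Defs
  imports "HOL-Algebra.Algebra"
begin

definition is_walk :: "'v set \<Rightarrow> ('v \<Rightarrow> 'v \<Rightarrow> bool) \<Rightarrow> 'v list \<Rightarrow> bool" where
  "is_walk V E ps \<longleftrightarrow> ps \<noteq> [] \<and> set ps \<subseteq> V \<and> successively E ps"

definition is_path :: "'v set \<Rightarrow> ('v \<Rightarrow> 'v \<Rightarrow> bool) \<Rightarrow> 'v list \<Rightarrow> bool" where
  "is_path V E ps \<longleftrightarrow> is_walk V E ps \<and> distinct ps"

definition graph_dist_le :: "'v set \<Rightarrow> ('v \<Rightarrow> 'v \<Rightarrow> bool) \<Rightarrow> 'v \<Rightarrow> 'v \<Rightarrow> nat \<Rightarrow> bool" where
  "graph_dist_le V E u v k \<longleftrightarrow>
     (\<exists>ps. is_walk V E ps \<and> hd ps = u \<and> last ps = v \<and> length ps - 1 \<le> k)"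

definition is_UFO :: "'v set \<Rightarrow> ('v \<Rightarrow> 'v \<Rightarrow> bool) \<Rightarrow> nat \<Rightarrow> nat \<Rightarrow> nat
    \<Rightarrow> 'v set \<Rightarrow> 'v set \<Rightarrow> 'v set \<Rightarrow> bool" where
  "is_UFO V E m k r U F Ob \<longleftrightarrow>
     U \<subseteq> V \<and> F \<subseteq> V \<and> Ob \<subseteq> V \<and> finite U \<and> finite F \<and> finite Ob \<and>
     U \<inter> F = {} \<and> U \<inter> Ob = {} \<and> F \<inter> Ob = {} \<and> U \<noteq> {} \<and>
     card U \<ge> m * card F \<and>
     (\<exists>\<mu>. bij_betw \<mu> U Ob \<and> (\<forall>u\<in>U. graph_dist_le V E u (\<mu> u) k)) \<and>
     (\<forall>ps. is_path V E ps \<and> hd ps \<in> U \<and> last ps \<in> Ob \<longrightarrow>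
            set ps \<inter> F \<noteq> {} \<or> length ps - 1 \<ge> r)"

definition extraterrestrial :: "'v set \<Rightarrow> ('v \<Rightarrow> 'v \<Rightarrow> bool) \<Rightarrow> bool" where
  "extraterrestrial V E \<longleftrightarrow>
     (\<forall>m::nat. \<exists>k::nat. \<forall>r::nat. \<exists>U F Ob. is_UFO V E m k r U F Ob)"

definition symmetric_gen_set :: "('a, 'b) monoid_scheme \<Rightarrow> 'a set \<Rightarrow> bool" where
  "symmetric_gen_set G S \<longleftrightarrow> finite S \<and> S \<subseteq> carrier G \<and>
     (\<forall>s\<in>S. inv\<^bsub>G\<^esub> s \<in> S) \<and> generate G S = carrier G"

definition finitely_generated :: "('a, 'b) monoid_scheme \<Rightarrow> bool" where
  "finitely_generated G \<longleftrightarrow> (\<exists>S. finite S \<and> S \<subseteq> carrier G \<and> generate G S = carrier G)"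

definition cayley_adj :: "('a, 'b) monoid_scheme \<Rightarrow> 'a set \<Rightarrow> 'a \<Rightarrow> 'a \<Rightarrow> bool" where
  "cayley_adj G S g g' \<longleftrightarrow> g \<in> carrier G \<and> g' \<in> carrier G \<and>
     (\<exists>s\<in>S. g' = g \<otimes>\<^bsub>G\<^esub> s)"

definition schreier_adj :: "('a, 'b) monoid_scheme \<Rightarrow> 'a set \<Rightarrow> 'a set \<Rightarrow> 'a set \<Rightarrow> 'a set \<Rightarrow> bool" where
  "schreier_adj G H S C C' \<longleftrightarrow> C \<in> rcosets\<^bsub>G\<^esub> H \<and> C' \<in> rcosets\<^bsub>G\<^esub> H \<and>
     (\<exists>s\<in>S. C' = C #>\<^bsub>G\<^esub> s)"

definition extraterrestrial_group :: "('a, 'b) monoid_scheme \<Rightarrow> bool" where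
  "extraterrestrial_group G \<longleftrightarrow>
     (\<exists>S. symmetric_gen_set G S \<and> extraterrestrial (carrier G) (cayley_adj G S))"

definition amenable :: "('a, 'b) monoid_scheme \<Rightarrow> bool" where
  "amenable G \<longleftrightarrow> (\<exists>\<mu> :: 'a set \<Rightarrow> real.
     (\<forall>A. A \<subseteq> carrier G \<longrightarrow> \<mu> A \<ge> 0) \<and>
     \<mu> (carrier G) = 1 \<and>
     (\<forall>A B. A \<subseteq> carrier G \<longrightarrow> B \<subseteq> carrier G \<longrightarrow> A \<inter> B = {} \<longrightarrow>
            \<mu> (A \<union> B) = \<mu> A + \<mu> B) \<and>
     (\<forall>g\<in>carrier G. \<forall>A. A \<subseteq> carrier G \<longrightarrow> \<mu> (g <#\<^bsub>G\<^esub> A) = \<mu> A))"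

end

theory Submission
  imports Defs
begin


definition hallc :: "'l set \<Rightarrow> ('l \<Rightarrow> 'r set) \<Rightarrow> bool" where
  "hallc L M \<longleftrightarrow> (\<forall>B. B \<subseteq> L \<longrightarrow> finite B \<longrightarrow> card B \<le> card (\<Union> (M ` B)))"

definition remv :: "('l \<Rightarrow> 'r set) \<Rightarrow> ('l \<times> 'r) set \<Rightarrow> 'l \<Rightarrow> 'r set" where
  "remv N D x = {y \<in> N x. (x, y) \<notin> D}"

lemma remv_empty[simp]: "remv N {} = N"
  by (auto simp: remv_def fun_eq_iff)

lemma hall_chain:
  assumes fin: "\<forall>x\<in>L. finite (N x)"
    and h0: "hallc L N"
    and C: "C \<in> chains {D. hallc L (remv N D)}"
  shows "hallc L (remv N (\<Union>C))"
proof (cases "C = {}")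
  case True
  then show ?thesis using h0 by (simp add: remv_def)
next
  case False
  show ?thesis unfolding hallc_def
  proof (intro allI impI)
    fix B assume BL: "B \<subseteq> L" and fB: "finite B"
    define Fin where "Fin = Sigma B N"
    have fF: "finite Fin" unfolding Fin_def using fB fin BL by auto
    obtain D0 where D0: "D0 \<in> C" using False by blast
    have bnd: "\<forall>D. D \<in> C \<longrightarrow> card (D \<inter> Fin) < Suc (card Fin)"
      using fF by (simp add: card_mono le_imp_less_Suc)
    have "\<exists>Dm. Dm \<in> C \<and> (\<forall>D'. D' \<in> C \<longrightarrow> card (D' \<inter> Fin) \<le> card (Dm \<inter> Fin))"
      using ex_has_greatest_nat[of "\<lambda>D. D \<in> C" D0 "\<lambda>D. card (D \<inter> Fin)" "Suc (card Fin)", OF D0 bnd] .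
    then obtain Dm where Dm: "Dm \<in> C" and nmax: "\<forall>D'. D' \<in> C \<longrightarrow> card (D' \<inter> Fin) \<le> card (Dm \<inter> Fin)"
      by blast
    have sub: "\<Union>C \<inter> Fin \<subseteq> Dm"
    proof
      fix p assume p: "p \<in> \<Union>C \<inter> Fin"
      then obtain D' where D': "D' \<in> C" "p \<in> D'" by blast
      have ch: "D' \<subseteq> Dm \<or> Dm \<subseteq> D'" using C D' Dm unfolding chains_def chain_subset_def by blast
      show "p \<in> Dm"
      proof (cases "D' \<subseteq> Dm")
        case True then show ?thesis using D' by blast
      next
        case False
        then have "Dm \<subseteq> D'" using ch by blast
        then have s: "Dm \<inter> Fin \<subseteq> D' \<inter> Fin" by blast
        have "card (D' \<inter> Fin) \<le> card (Dm \<inter> Fin)" using nmax D' by blast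
        moreover have "card (Dm \<inter> Fin) \<le> card (D' \<inter> Fin)" using s fF by (simp add: card_mono)
        ultimately have "card (Dm \<inter> Fin) = card (D' \<inter> Fin)" by linarith
        then have "Dm \<inter> Fin = D' \<inter> Fin" using card_subset_eq[OF _ s] fF by simp
        then show ?thesis using p D' by blast
      qed
    qed
    have eq: "\<And>x. x \<in> B \<Longrightarrow> remv N Dm x \<subseteq> remv N (\<Union>C) x"
      using sub unfolding remv_def Fin_def by blast
    have "hallc L (remv N Dm)" using C Dm unfolding chains_def by blast
    then have "card B \<le> card (\<Union> (remv N Dm ` B))" using BL fB unfolding hallc_def by blast
    also have "\<dots> \<le> card (\<Union> (remv N (\<Union>C) ` B))"
    proof (rule card_mono)
      show "finite (\<Union> (remv N (\<Union>C) ` B))" using fB fin BL unfolding remv_def by auto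
      show "\<Union> (remv N Dm ` B) \<subseteq> \<Union> (remv N (\<Union>C) ` B)" using eq by blast
    qed
    finally show "card B \<le> card (\<Union> (remv N (\<Union>C) ` B))" .
  qed
qed


lemma hall_inf:
  fixes N :: "'l \<Rightarrow> 'r set"
  assumes fin: "\<forall>x\<in>L. finite (N x)"
    and h0: "hallc L N"
  shows "\<exists>f. inj_on f L \<and> (\<forall>x\<in>L. f x \<in> N x)"
proof -
  define \<A> where "\<A> = {D. hallc L (remv N D)}"
  have "\<forall>C\<in>chains \<A>. \<Union>C \<in> \<A>"
    using hall_chain[OF fin h0] unfolding \<A>_def by blast
  then obtain D where D: "D \<in> \<A>" and Dmax: "\<forall>Z\<in>\<A>. D \<subseteq> Z \<longrightarrow> Z = D"
    using Zorn_Lemma[of \<A>] by blast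
  define M where "M = remv N D"
  have hM: "hallc L M" using D unfolding \<A>_def M_def by blast
  have finM: "\<And>x. x \<in> L \<Longrightarrow> finite (M x)" using fin unfolding M_def remv_def by auto
  have MN: "\<And>x. M x \<subseteq> N x" unfolding M_def remv_def by auto
  have ne: "\<And>x. x \<in> L \<Longrightarrow> M x \<noteq> {}"
  proof -
    fix x assume x: "x \<in> L"
    have "card {x} \<le> card (\<Union> (M ` {x}))" using hM x unfolding hallc_def by blast
    then show "M x \<noteq> {}" by auto
  qed
  have viol: "\<exists>A. A \<subseteq> L \<and> finite A \<and> x \<notin> A \<and> card (\<Union> (M ` A) \<union> (M x - {b})) \<le> card A"
    if x: "x \<in> L" and b: "b \<in> M x" for x b
  proof -
    have "insert (x, b) D \<notin> \<A>"
    proof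
      assume "insert (x, b) D \<in> \<A>"
      then have "insert (x, b) D = D" using Dmax by blast
      then show False using b unfolding M_def remv_def by auto
    qed
    then obtain B where B: "B \<subseteq> L" "finite B"
      and lt: "\<not> card B \<le> card (\<Union> (remv N (insert (x, b) D) ` B))"
      unfolding \<A>_def hallc_def by blast
    have r: "\<And>y. remv N (insert (x, b) D) y = (if y = x then M x - {b} else M y)"
      unfolding M_def remv_def by auto
    show ?thesis
    proof (cases "x \<in> B")
      case False
      then have "\<Union> (remv N (insert (x, b) D) ` B) = \<Union> (M ` B)" using r by auto
      then show ?thesis using lt hM B unfolding hallc_def by auto
    next
      case True
      define A where "A = B - {x}"
      have BA: "B = insert x A" "x \<notin> A" using True unfolding A_def by auto
      have "\<Union> (remv N (insert (x, b) D) ` B) = \<Union> (M ` A) \<union> (M x - {b})"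
        using r BA by auto
      moreover have "card B = Suc (card A)" using BA B by (simp add: card_insert_if)
      ultimately show ?thesis using lt B BA by (intro exI[of _ A]) auto
    qed
  qed
  have single: "b1 = b2" if x: "x \<in> L" and b1: "b1 \<in> M x" and b2: "b2 \<in> M x" for x b1 b2
  proof (rule ccontr)
    assume nb: "b1 \<noteq> b2"
    obtain A1 where A1: "A1 \<subseteq> L" "finite A1" "x \<notin> A1"
      and c1: "card (\<Union> (M ` A1) \<union> (M x - {b1})) \<le> card A1"
      using viol[OF x b1] by blast
    obtain A2 where A2: "A2 \<subseteq> L" "finite A2" "x \<notin> A2"
      and c2: "card (\<Union> (M ` A2) \<union> (M x - {b2})) \<le> card A2"
      using viol[OF x b2] by blast
    define X1 where "X1 = \<Union> (M ` A1) \<union> (M x - {b1})"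
    define X2 where "X2 = \<Union> (M ` A2) \<union> (M x - {b2})"
    have fX1: "finite X1" unfolding X1_def using A1 finM x by auto
    have fX2: "finite X2" unfolding X2_def using A2 finM x by auto
    have u: "\<Union> (M ` (insert x (A1 \<union> A2))) \<subseteq> X1 \<union> X2"
      unfolding X1_def X2_def using nb by auto
    have i: "\<Union> (M ` (A1 \<inter> A2)) \<subseteq> X1 \<inter> X2"
      unfolding X1_def X2_def by auto
    have "insert x (A1 \<union> A2) \<subseteq> L" "finite (insert x (A1 \<union> A2))" using A1 A2 x by auto
    then have "card (insert x (A1 \<union> A2)) \<le> card (\<Union> (M ` (insert x (A1 \<union> A2))))"
      using hM unfolding hallc_def by blast
    also have "\<dots> \<le> card (X1 \<union> X2)" using u fX1 fX2 by (simp add: card_mono)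
    finally have e1: "card (insert x (A1 \<union> A2)) \<le> card (X1 \<union> X2)" .
    have "A1 \<inter> A2 \<subseteq> L" "finite (A1 \<inter> A2)" using A1 A2 by auto
    then have "card (A1 \<inter> A2) \<le> card (\<Union> (M ` (A1 \<inter> A2)))"
      using hM unfolding hallc_def by blast
    also have "\<dots> \<le> card (X1 \<inter> X2)" using i fX1 fX2 by (simp add: card_mono)
    finally have e2: "card (A1 \<inter> A2) \<le> card (X1 \<inter> X2)" .
    have e3: "card (insert x (A1 \<union> A2)) = Suc (card (A1 \<union> A2))"
      using A1 A2 by simp
    have e4: "card (A1 \<union> A2) + card (A1 \<inter> A2) = card A1 + card A2"
      using card_Un_Int[OF A1(2) A2(2)] by simp
    have e5: "card (X1 \<union> X2) + card (X1 \<inter> X2) = card X1 + card X2"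
      using card_Un_Int[OF fX1 fX2] by simp
    show False using e1 e2 e3 e4 e5 c1 c2 unfolding X1_def[symmetric] X2_def[symmetric] by linarith
  qed
  define f where "f x = (SOME y. y \<in> M x)" for x
  have fM: "\<And>x. x \<in> L \<Longrightarrow> M x = {f x}"
  proof -
    fix x assume x: "x \<in> L"
    have "f x \<in> M x" unfolding f_def using ne[OF x] by (simp add: some_in_eq)
    then show "M x = {f x}" using single[OF x] by blast
  qed
  have finj: "inj_on f L"
  proof (rule inj_onI)
    fix x y assume x: "x \<in> L" and y: "y \<in> L" and e: "f x = f y"
    show "x = y"
    proof (rule ccontr)
      assume "x \<noteq> y"
      then have c2: "card {x, y} = 2" by simp
      have "{x, y} \<subseteq> L" "finite {x, y}" using x y by auto
      then have c3: "card {x, y} \<le> card (\<Union> (M ` {x, y}))" using hM unfolding hallc_def by blast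
      have "\<Union> (M ` {x, y}) = {f x}" using fM x y e by auto
      then show False using c2 c3 by simp
    qed
  qed
  have "\<forall>x\<in>L. f x \<in> N x" using fM MN by blast
  then show ?thesis using finj by (intro exI[of _ f]) simp
qed



lemma mean_finsum:
  assumes add: "\<forall>A B. A \<subseteq> H \<longrightarrow> B \<subseteq> H \<longrightarrow> A \<inter> B = {} \<longrightarrow> \<mu> (A \<union> B) = \<mu> A + (\<mu> B::real)"
  shows "finite I \<Longrightarrow> (\<forall>i\<in>I. Y i \<subseteq> H) \<Longrightarrow> (\<forall>i\<in>I. \<forall>j\<in>I. i \<noteq> j \<longrightarrow> Y i \<inter> Y j = {})
     \<Longrightarrow> \<mu> (\<Union>i\<in>I. Y i) = (\<Sum>i\<in>I. \<mu> (Y i))"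
proof (induction I rule: finite_induct)
  case empty
  have "\<mu> ({} \<union> {}) = \<mu> {} + \<mu> {}" using add by blast
  then show ?case by simp
next
  case (insert i I)
  have "\<mu> (\<Union>j\<in>insert i I. Y j) = \<mu> (Y i \<union> (\<Union>j\<in>I. Y j))" by simp
  also have "\<dots> = \<mu> (Y i) + \<mu> (\<Union>j\<in>I. Y j)"
    using add insert.prems insert.hyps by (intro add[rule_format]) auto
  also have "\<dots> = \<mu> (Y i) + (\<Sum>j\<in>I. \<mu> (Y j))" using insert by simp
  finally show ?case using insert.hyps by simp
qed

lemma folner:
  assumes grp: "group G" and sg: "subgroup H G" and am: "amenable (G\<lparr>carrier := H\<rparr>)"
    and fK: "finite K" and KH: "K \<subseteq> H"
  shows "\<exists>A. finite A \<and> A \<noteq> {} \<and> A \<subseteq> H \<and> card ((\<lambda>(k,a). k \<otimes>\<^bsub>G\<^esub> a) ` (K \<times> A)) < 2 * card A"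
proof (rule ccontr)
  assume nf0: "\<not> ?thesis"
  have nf: "2 * card A \<le> card ((\<lambda>(k,a). k \<otimes>\<^bsub>G\<^esub> a) ` (K \<times> A))"
    if A: "finite A" "A \<noteq> {}" "A \<subseteq> H" for A
  proof (rule ccontr)
    assume "\<not> 2 * card A \<le> card ((\<lambda>(k,a). k \<otimes>\<^bsub>G\<^esub> a) ` (K \<times> A))"
    then have "card ((\<lambda>(k,a). k \<otimes>\<^bsub>G\<^esub> a) ` (K \<times> A)) < 2 * card A" by simp
    then show False using nf0 A by blast
  qed
  have Hc: "H \<subseteq> carrier G" using sg by (rule subgroup.subset)
  obtain \<mu> :: "'a set \<Rightarrow> real" where mu: "(\<forall>A. A \<subseteq> carrier (G\<lparr>carrier := H\<rparr>) \<longrightarrow> \<mu> A \<ge> 0) \<and>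
     \<mu> (carrier (G\<lparr>carrier := H\<rparr>)) = 1 \<and>
     (\<forall>A B. A \<subseteq> carrier (G\<lparr>carrier := H\<rparr>) \<longrightarrow> B \<subseteq> carrier (G\<lparr>carrier := H\<rparr>) \<longrightarrow> A \<inter> B = {} \<longrightarrow>
            \<mu> (A \<union> B) = \<mu> A + \<mu> B) \<and>
     (\<forall>g\<in>carrier (G\<lparr>carrier := H\<rparr>). \<forall>A. A \<subseteq> carrier (G\<lparr>carrier := H\<rparr>) \<longrightarrow> \<mu> (g <#\<^bsub>G\<lparr>carrier := H\<rparr>\<^esub> A) = \<mu> A)"
    using am[unfolded amenable_def] by (rule exE)
  note pos0 = mu[THEN conjunct1]
  note one0 = mu[THEN conjunct2, THEN conjunct1]
  note add0 = mu[THEN conjunct2, THEN conjunct2, THEN conjunct1]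
  note inv0 = mu[THEN conjunct2, THEN conjunct2, THEN conjunct2]
  have pos: "\<forall>A. A \<subseteq> H \<longrightarrow> \<mu> A \<ge> 0" using pos0 by simp
  have one: "\<mu> H = 1" using one0 by simp
  have add: "\<forall>A B. A \<subseteq> H \<longrightarrow> B \<subseteq> H \<longrightarrow> A \<inter> B = {} \<longrightarrow> \<mu> (A \<union> B) = \<mu> A + \<mu> B"
    using add0 by simp
  have inv: "\<mu> ((\<lambda>a. g \<otimes>\<^bsub>G\<^esub> a) ` A) = \<mu> A" if "g \<in> H" "A \<subseteq> H" for g A
  proof -
    have "(\<lambda>a. g \<otimes>\<^bsub>G\<^esub> a) ` A = g <#\<^bsub>G\<lparr>carrier := H\<rparr>\<^esub> A" unfolding l_coset_def by auto
    then show ?thesis using inv0 that by simp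
  qed
  define N where "N = (\<lambda>(a::'a, i::bool). (\<lambda>k. k \<otimes>\<^bsub>G\<^esub> a) ` K)"
  define L where "L = H \<times> (UNIV :: bool set)"
  have finN: "\<forall>x\<in>L. finite (N x)" unfolding N_def using fK by auto
  have hc: "hallc L N" unfolding hallc_def
  proof (intro allI impI)
    fix B assume BL: "B \<subseteq> L" and fB: "finite B"
    show "card B \<le> card (\<Union> (N ` B))"
    proof (cases "B = {}")
      case True then show ?thesis by simp
    next
      case False
      define A where "A = fst ` B"
      have fA: "finite A" "A \<noteq> {}" "A \<subseteq> H" using fB False BL unfolding A_def L_def by auto
      have "B \<subseteq> A \<times> (UNIV :: bool set)" unfolding A_def by force
      then have "card B \<le> card (A \<times> (UNIV :: bool set))" using fA by (intro card_mono) auto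
      also have "\<dots> = 2 * card A" by (simp add: card_cartesian_product)
      also have "\<dots> \<le> card ((\<lambda>(k,a). k \<otimes>\<^bsub>G\<^esub> a) ` (K \<times> A))" using nf[OF fA] .
      also have "(\<lambda>(k,a). k \<otimes>\<^bsub>G\<^esub> a) ` (K \<times> A) = \<Union> (N ` B)" unfolding N_def A_def by force
      finally show ?thesis .
    qed
  qed
  obtain \<phi> where \<phi>inj: "inj_on \<phi> L" and \<phi>N: "\<forall>x\<in>L. \<phi> x \<in> N x"
    using hall_inf[OF finN hc] by blast
  define Img where "Img i = (\<lambda>a. \<phi> (a, i)) ` H" for i
  have ImgH: "Img i \<subseteq> H" for i
  proof
    fix y assume "y \<in> Img i"
    then obtain a where a: "a \<in> H" "y = \<phi> (a, i)" unfolding Img_def by auto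
    then have "y \<in> N (a, i)" using \<phi>N unfolding L_def by auto
    then obtain k where "k \<in> K" "y = k \<otimes>\<^bsub>G\<^esub> a" unfolding N_def by auto
    then show "y \<in> H" using a(1) KH subgroup.m_closed[OF sg] by auto
  qed
  have Img1: "\<mu> (Img i) = 1" for i
  proof -
    define P where "P k = {a \<in> H. \<phi> (a, i) = k \<otimes>\<^bsub>G\<^esub> a}" for k
    have PH: "\<forall>k\<in>K. P k \<subseteq> H" unfolding P_def by auto
    have cov: "H = (\<Union>k\<in>K. P k)"
    proof
      show "H \<subseteq> (\<Union>k\<in>K. P k)"
      proof
        fix a assume a: "a \<in> H"
        then have "\<phi> (a, i) \<in> N (a, i)" using \<phi>N unfolding L_def by auto
        then obtain k where "k \<in> K" "\<phi> (a, i) = k \<otimes>\<^bsub>G\<^esub> a" unfolding N_def by auto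
        then show "a \<in> (\<Union>k\<in>K. P k)" using a unfolding P_def by auto
      qed
    qed (auto simp: P_def)
    have canc: "k = k'" if "k \<in> K" "k' \<in> K" "a \<in> H" "k \<otimes>\<^bsub>G\<^esub> a = k' \<otimes>\<^bsub>G\<^esub> a" for k k' a
      using that KH Hc group.right_cancel[OF grp] by blast
    have Pdisj: "\<forall>k\<in>K. \<forall>k'\<in>K. k \<noteq> k' \<longrightarrow> P k \<inter> P k' = {}"
      unfolding P_def using canc by auto
    have muH: "\<mu> H = (\<Sum>k\<in>K. \<mu> (P k))"
      using mean_finsum[OF add fK PH Pdisj] cov by simp
    define Q where "Q k = (\<lambda>a. k \<otimes>\<^bsub>G\<^esub> a) ` P k" for k
    have QImg: "Img i = (\<Union>k\<in>K. Q k)"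
    proof
      show "Img i \<subseteq> (\<Union>k\<in>K. Q k)"
      proof
        fix y assume "y \<in> Img i"
        then obtain a where a: "a \<in> H" "y = \<phi> (a, i)" unfolding Img_def by auto
        then obtain k where "k \<in> K" "a \<in> P k" using cov by blast
        then show "y \<in> (\<Union>k\<in>K. Q k)" using a unfolding Q_def P_def by auto
      qed
      show "(\<Union>k\<in>K. Q k) \<subseteq> Img i"
      proof
        fix y assume "y \<in> (\<Union>k\<in>K. Q k)"
        then obtain k a where ka: "k \<in> K" "a \<in> P k" "y = k \<otimes>\<^bsub>G\<^esub> a" unfolding Q_def by blast
        then have ya: "y = \<phi> (a, i)" "a \<in> H" unfolding P_def by auto
        show "y \<in> Img i" unfolding Img_def using ya by (rule image_eqI)
      qed
    qed
    have QH: "\<forall>k\<in>K. Q k \<subseteq> H"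
      using QImg ImgH by blast
    have Qdisj: "\<forall>k\<in>K. \<forall>k'\<in>K. k \<noteq> k' \<longrightarrow> Q k \<inter> Q k' = {}"
    proof (intro ballI impI)
      fix k k' assume k: "k \<in> K" "k' \<in> K" "k \<noteq> k'"
      show "Q k \<inter> Q k' = {}"
      proof (rule ccontr)
        assume "Q k \<inter> Q k' \<noteq> {}"
        then obtain a a' where aa: "a \<in> P k" "a' \<in> P k'" "k \<otimes>\<^bsub>G\<^esub> a = k' \<otimes>\<^bsub>G\<^esub> a'"
          unfolding Q_def by auto
        then have "\<phi> (a, i) = \<phi> (a', i)" unfolding P_def by auto
        have aH: "a \<in> H" "a' \<in> H" using aa unfolding P_def by auto
        then have "(a, i) \<in> L" "(a', i) \<in> L" unfolding L_def by auto
        then have "(a, i) = (a', i)" using inj_onD[OF \<phi>inj \<open>\<phi> (a, i) = \<phi> (a', i)\<close>] by blast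
        then have "a = a'" by simp
        then show False using canc k aa PH by blast
      qed
    qed
    have "\<mu> (Img i) = (\<Sum>k\<in>K. \<mu> (Q k))"
      using mean_finsum[OF add fK QH Qdisj] QImg by simp
    also have "\<dots> = (\<Sum>k\<in>K. \<mu> (P k))"
      unfolding Q_def using inv KH PH by (intro sum.cong) auto
    finally show ?thesis using muH one by simp
  qed
  have dj: "Img True \<inter> Img False = {}"
  proof (rule ccontr)
    assume "Img True \<inter> Img False \<noteq> {}"
    then obtain a b where ab: "a \<in> H" "b \<in> H" "\<phi> (a, True) = \<phi> (b, False)" unfolding Img_def by blast
    then have "(a, True) \<in> L" "(b, False) \<in> L" unfolding L_def by auto
    then have "(a, True) = (b, False)" using inj_onD[OF \<phi>inj ab(3)] by blast
    then show False by simp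
  qed
  have "\<mu> (Img True \<union> Img False) = \<mu> (Img True) + \<mu> (Img False)"
    using ImgH dj by (intro add[rule_format]) auto
  then have two: "\<mu> (Img True \<union> Img False) = 2" using Img1 by simp
  moreover have "\<mu> H = \<mu> (Img True \<union> Img False) + \<mu> (H - (Img True \<union> Img False))"
  proof -
    have eqH: "(Img True \<union> Img False) \<union> (H - (Img True \<union> Img False)) = H" using ImgH by blast
    have "\<mu> H = \<mu> ((Img True \<union> Img False) \<union> (H - (Img True \<union> Img False)))" using eqH by simp
    also have "\<mu> ((Img True \<union> Img False) \<union> (H - (Img True \<union> Img False))) = \<mu> (Img True \<union> Img False) + \<mu> (H - (Img True \<union> Img False))"
      using ImgH by (intro add[rule_format]) auto
    finally show ?thesis .
  qed
  moreover have "\<mu> (H - (Img True \<union> Img False)) \<ge> 0" using pos by simp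
  ultimately show False using one by linarith
qed



lemma walk_to_path:
  "is_walk V E ps \<Longrightarrow> \<exists>qs. is_path V E qs \<and> hd qs = hd ps \<and> last qs = last ps \<and> set qs \<subseteq> set ps \<and> length qs \<le> length ps"
proof (induction "length ps" arbitrary: ps rule: less_induct)
  case less
  show ?case
  proof (cases "distinct ps")
    case True
    then show ?thesis using less.prems unfolding is_path_def by blast
  next
    case False
    then obtain xs ys zs y where ps: "ps = xs @ [y] @ ys @ [y] @ zs" using not_distinct_decomp by blast
    define ps' where "ps' = xs @ [y] @ zs"
    have sw: "successively E ps" using less.prems unfolding is_walk_def by blast
    have "successively E ((xs @ [y]) @ (ys @ [y] @ zs))" using sw unfolding ps by simp
    then have s1: "successively E (xs @ [y])" by (subst (asm) successively_append_iff) blast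
    have "successively E ((xs @ [y] @ ys) @ ([y] @ zs))" using sw unfolding ps by simp
    then have s2: "successively E ([y] @ zs)" by (subst (asm) successively_append_iff) blast
    note s1 s2
    then have "successively E ps'" unfolding ps'_def
      using successively_append_iff[of E "xs @ [y]" zs] successively_append_iff[of E "[y]" zs]
      by (cases zs) auto
    then have w': "is_walk V E ps'" using less.prems unfolding is_walk_def ps'_def ps by auto
    have lt: "length ps' < length ps" unfolding ps'_def ps by simp
    obtain qs where qs: "is_path V E qs" "hd qs = hd ps'" "last qs = last ps'" "set qs \<subseteq> set ps'" "length qs \<le> length ps'"
      using less.hyps[OF lt w'] by blast
    have "hd ps' = hd ps" unfolding ps'_def ps by (cases xs) auto
    moreover have "last ps' = last ps" unfolding ps'_def ps by (cases zs) auto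
    moreover have "set ps' \<subseteq> set ps" unfolding ps'_def ps by auto
    ultimately show ?thesis using qs lt by (intro exI[of _ qs]) auto
  qed
qed

lemma walk_map:
  assumes "is_walk V E ps" and "\<And>x. x \<in> V \<Longrightarrow> f x \<in> V'" and "\<And>x y. E x y \<Longrightarrow> E' (f x) (f y)"
  shows "is_walk V' E' (map f ps)"
  using assms unfolding is_walk_def by (auto simp: successively_map elim: successively_mono)

primrec Bn :: "('a, 'b) monoid_scheme \<Rightarrow> 'a set \<Rightarrow> nat \<Rightarrow> 'a set" where
  "Bn G S 0 = {\<one>\<^bsub>G\<^esub>}"
| "Bn G S (Suc n) = Bn G S n \<union> (\<lambda>(z, s). z \<otimes>\<^bsub>G\<^esub> s) ` (Bn G S n \<times> S)"

lemma Bn_finite: "finite S \<Longrightarrow> finite (Bn G S n)"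
  by (induction n) auto

lemma Bn_mono: "j \<le> n \<Longrightarrow> Bn G S j \<subseteq> Bn G S n"
proof (induction n)
  case 0 then show ?case by simp
next
  case (Suc n)
  then show ?case by (cases "j = Suc n") auto
qed

lemma walk_word:
  assumes grp: "group G" and SC: "S \<subseteq> carrier G"
    and w: "is_walk (carrier G) (cayley_adj G S) ps"
  shows "j < length ps \<Longrightarrow> \<exists>z\<in>Bn G S j. z \<in> carrier G \<and> ps ! j = hd ps \<otimes>\<^bsub>G\<^esub> z"
proof (induction j)
  interpret G: group G by (rule grp)
  case 0
  have "hd ps \<in> carrier G" using w unfolding is_walk_def by (cases ps) auto
  moreover have "ps ! 0 = hd ps" using 0 by (cases ps) auto
  ultimately show ?case by auto
next
  interpret G: group G by (rule grp)
  case (Suc j)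
  then obtain z where z: "z \<in> Bn G S j" "z \<in> carrier G" "ps ! j = hd ps \<otimes>\<^bsub>G\<^esub> z" by auto
  have "cayley_adj G S (ps ! j) (ps ! Suc j)"
    using w Suc.prems unfolding is_walk_def by (blast intro: successively_nth)
  then obtain s where s: "s \<in> S" "ps ! Suc j = ps ! j \<otimes>\<^bsub>G\<^esub> s" "ps ! j \<in> carrier G"
    unfolding cayley_adj_def by blast
  have h: "hd ps \<in> carrier G" using w unfolding is_walk_def by (cases ps) auto
  have sc: "s \<in> carrier G" using s SC by blast
  have "ps ! Suc j = hd ps \<otimes>\<^bsub>G\<^esub> (z \<otimes>\<^bsub>G\<^esub> s)" using s z h sc by (simp add: G.m_assoc)
  moreover have "z \<otimes>\<^bsub>G\<^esub> s \<in> Bn G S (Suc j)" using z s by auto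
  moreover have "z \<otimes>\<^bsub>G\<^esub> s \<in> carrier G" using z sc by simp
  ultimately show ?case by blast
qed

lemma rc_carrier:
  assumes grp: "group G" and sg: "subgroup H G" and C: "C \<in> rcosets\<^bsub>G\<^esub> H"
  shows "\<exists>g\<in>carrier G. C = H #>\<^bsub>G\<^esub> g" and "C \<subseteq> carrier G"
proof -
  interpret G: group G by (rule grp)
  show g: "\<exists>g\<in>carrier G. C = H #>\<^bsub>G\<^esub> g" using C unfolding RCOSETS_def by blast
  then show "C \<subseteq> carrier G" using subgroup.subset[OF sg] unfolding r_coset_def by auto
qed

lemma walk_lift:
  assumes grp: "group G" and sg: "subgroup H G" and SC: "S \<subseteq> carrier G"
  shows "is_walk (rcosets\<^bsub>G\<^esub> H) (schreier_adj G H S) qs \<Longrightarrow> x \<in> hd qs \<Longrightarrow>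
     \<exists>ps. is_walk (carrier G) (cayley_adj G S) ps \<and> hd ps = x \<and> last ps \<in> last qs \<and> length ps = length qs"
proof (induction qs arbitrary: x)
  case Nil
  then show ?case unfolding is_walk_def by simp
next
  interpret G: group G by (rule grp)
  case (Cons C rest)
  have CR: "C \<in> rcosets\<^bsub>G\<^esub> H" using Cons.prems unfolding is_walk_def by simp
  have Csub: "C \<subseteq> carrier G" using rc_carrier(2)[OF grp sg CR] .
  have xC: "x \<in> C" using Cons.prems by simp
  have xc: "x \<in> carrier G" using xC Csub by blast
  show ?case
  proof (cases rest)
    case Nil
    then show ?thesis using xC xc unfolding is_walk_def by (intro exI[of _ "[x]"]) auto
  next
    case (Cons C' rest')
    have adj: "schreier_adj G H S C C'" using Cons.prems unfolding is_walk_def \<open>rest = C' # rest'\<close> by simp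
    then obtain s where s: "s \<in> S" "C' = C #>\<^bsub>G\<^esub> s" unfolding schreier_adj_def by blast
    have xs: "x \<otimes>\<^bsub>G\<^esub> s \<in> C'" using s xC unfolding r_coset_def by blast
    have wr: "is_walk (rcosets\<^bsub>G\<^esub> H) (schreier_adj G H S) rest"
      using Cons.prems unfolding is_walk_def \<open>rest = C' # rest'\<close> by simp
    obtain ps where ps: "is_walk (carrier G) (cayley_adj G S) ps" "hd ps = x \<otimes>\<^bsub>G\<^esub> s"
      "last ps \<in> last rest" "length ps = length rest"
      using Cons.IH[OF wr] xs \<open>rest = C' # rest'\<close> by auto
    have sc: "s \<in> carrier G" using s SC by blast
    have ne: "ps \<noteq> []" using ps unfolding is_walk_def by simp
    have "cayley_adj G S x (hd ps)" unfolding cayley_adj_def using ps s xc sc by auto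
    then have "is_walk (carrier G) (cayley_adj G S) (x # ps)"
      using ps(1) ne xc unfolding is_walk_def by (cases ps) auto
    moreover have "last (x # ps) \<in> last (C # rest)" using ps ne \<open>rest = C' # rest'\<close> by simp
    ultimately show ?thesis using ps by (intro exI[of _ "x # ps"]) simp
  qed
qed



lemma coset_facts:
  assumes grp: "group G" and sg: "subgroup H G"
  shows "x \<in> carrier G \<Longrightarrow> h \<in> H \<Longrightarrow> H #>\<^bsub>G\<^esub> (h \<otimes>\<^bsub>G\<^esub> x) = H #>\<^bsub>G\<^esub> x"
    and "C \<in> rcosets\<^bsub>G\<^esub> H \<Longrightarrow> x \<in> C \<Longrightarrow> H #>\<^bsub>G\<^esub> x = C"
    and "x \<in> carrier G \<Longrightarrow> y \<in> carrier G \<Longrightarrow> H #>\<^bsub>G\<^esub> x = H #>\<^bsub>G\<^esub> y \<Longrightarrow> x \<otimes>\<^bsub>G\<^esub> inv\<^bsub>G\<^esub> y \<in> H"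
    and "x \<in> carrier G \<Longrightarrow> H #>\<^bsub>G\<^esub> x \<in> rcosets\<^bsub>G\<^esub> H"
proof -
  interpret G: group G by (rule grp)
  have Hc: "H \<subseteq> carrier G" using sg by (rule subgroup.subset)
  show "H #>\<^bsub>G\<^esub> (h \<otimes>\<^bsub>G\<^esub> x) = H #>\<^bsub>G\<^esub> x" if "x \<in> carrier G" "h \<in> H"
  proof -
    have hc: "h \<in> carrier G" using that Hc by blast
    have "H #>\<^bsub>G\<^esub> (h \<otimes>\<^bsub>G\<^esub> x) = (H #>\<^bsub>G\<^esub> h) #>\<^bsub>G\<^esub> x"
      using G.coset_mult_assoc[OF Hc hc that(1)] by simp
    also have "\<dots> = H #>\<^bsub>G\<^esub> x" using G.coset_join2[OF hc sg that(2)] by simp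
    finally show ?thesis .
  qed
  show "H #>\<^bsub>G\<^esub> x = C" if CC: "C \<in> rcosets\<^bsub>G\<^esub> H" "x \<in> C"
  proof -
    obtain g where g: "g \<in> carrier G" "C = H #>\<^bsub>G\<^esub> g" using rc_carrier(1)[OF grp sg CC(1)] by blast
    show ?thesis using G.repr_independence[of x H g] g CC sg by simp
  qed
  show "x \<otimes>\<^bsub>G\<^esub> inv\<^bsub>G\<^esub> y \<in> H" if xy: "x \<in> carrier G" "y \<in> carrier G" "H #>\<^bsub>G\<^esub> x = H #>\<^bsub>G\<^esub> y"
  proof -
    have "x \<in> H #>\<^bsub>G\<^esub> y" using G.rcos_self[OF xy(1) sg] xy(3) by simp
    then obtain h where h: "h \<in> H" "x = h \<otimes>\<^bsub>G\<^esub> y" unfolding r_coset_def by blast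
    have hc: "h \<in> carrier G" using h Hc by blast
    have "x \<otimes>\<^bsub>G\<^esub> inv\<^bsub>G\<^esub> y = h" using h hc xy(2) by (simp add: G.m_assoc)
    then show ?thesis using h by simp
  qed
  show "H #>\<^bsub>G\<^esub> x \<in> rcosets\<^bsub>G\<^esub> H" if "x \<in> carrier G"
    using G.rcosetsI[OF Hc that] .
qed

lemma folner_right:
  assumes grp: "group G" and sg: "subgroup H G" and am: "amenable (G\<lparr>carrier := H\<rparr>)"
    and fK: "finite K" and KH: "K \<subseteq> H"
  shows "\<exists>A. finite A \<and> A \<noteq> {} \<and> A \<subseteq> H \<and> card ((\<lambda>(a,k). a \<otimes>\<^bsub>G\<^esub> k) ` (A \<times> K)) < 2 * card A"
proof -
  interpret G: group G by (rule grp)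
  have Hc: "H \<subseteq> carrier G" using sg by (rule subgroup.subset)
  define K' where "K' = (\<lambda>x. inv\<^bsub>G\<^esub> x) ` K"
  have K'H: "K' \<subseteq> H" unfolding K'_def using KH subgroup.m_inv_closed[OF sg] by blast
  obtain A' where A': "finite A'" "A' \<noteq> {}" "A' \<subseteq> H"
    and c: "card ((\<lambda>(k,a). k \<otimes>\<^bsub>G\<^esub> a) ` (K' \<times> A')) < 2 * card A'"
    using folner[OF grp sg am _ K'H] fK unfolding K'_def by blast
  define A where "A = (\<lambda>x. inv\<^bsub>G\<^esub> x) ` A'"
  have injinv: "inj_on (\<lambda>x. inv\<^bsub>G\<^esub> x) (carrier G)"
    by (rule inj_onI) (metis G.inv_inv)
  have cA: "card A = card A'" unfolding A_def
    using card_image[OF inj_on_subset[OF injinv]] A' Hc by blast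
  have sub: "(\<lambda>(a,k). a \<otimes>\<^bsub>G\<^esub> k) ` (A \<times> K) \<subseteq> (\<lambda>x. inv\<^bsub>G\<^esub> x) ` ((\<lambda>(k,a). k \<otimes>\<^bsub>G\<^esub> a) ` (K' \<times> A'))"
  proof
    fix y assume "y \<in> (\<lambda>(a,k). a \<otimes>\<^bsub>G\<^esub> k) ` (A \<times> K)"
    then obtain a' k where ak: "a' \<in> A'" "k \<in> K" "y = inv\<^bsub>G\<^esub> a' \<otimes>\<^bsub>G\<^esub> k" unfolding A_def by auto
    have c1: "a' \<in> carrier G" "k \<in> carrier G" using ak A' KH Hc by auto
    have "y = inv\<^bsub>G\<^esub> (inv\<^bsub>G\<^esub> k \<otimes>\<^bsub>G\<^esub> a')" using ak c1 by (simp add: G.inv_mult_group)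
    moreover have "inv\<^bsub>G\<^esub> k \<otimes>\<^bsub>G\<^esub> a' \<in> (\<lambda>(k,a). k \<otimes>\<^bsub>G\<^esub> a) ` (K' \<times> A')"
      using ak unfolding K'_def by auto
    ultimately show "y \<in> (\<lambda>x. inv\<^bsub>G\<^esub> x) ` ((\<lambda>(k,a). k \<otimes>\<^bsub>G\<^esub> a) ` (K' \<times> A'))" by blast
  qed
  have fin: "finite ((\<lambda>(k,a). k \<otimes>\<^bsub>G\<^esub> a) ` (K' \<times> A'))" using fK A' unfolding K'_def by auto
  have "card ((\<lambda>(a,k). a \<otimes>\<^bsub>G\<^esub> k) ` (A \<times> K)) \<le> card ((\<lambda>x. inv\<^bsub>G\<^esub> x) ` ((\<lambda>(k,a). k \<otimes>\<^bsub>G\<^esub> a) ` (K' \<times> A')))"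
    using sub fin by (intro card_mono) auto
  also have "\<dots> \<le> card ((\<lambda>(k,a). k \<otimes>\<^bsub>G\<^esub> a) ` (K' \<times> A'))" by (rule card_image_le[OF fin])
  finally have "card ((\<lambda>(a,k). a \<otimes>\<^bsub>G\<^esub> k) ` (A \<times> K)) < 2 * card A" using c cA by linarith
  moreover have "finite A" "A \<noteq> {}" "A \<subseteq> H" unfolding A_def using A' subgroup.m_inv_closed[OF sg] by auto
  ultimately show ?thesis by blast
qed



theorem mainTheorem7:
  fixes G :: "('a, 'b) monoid_scheme" and H S :: "'a set"
  assumes "group G"
    and "finitely_generated G"
    and "subgroup H G"
    and "amenable (G\<lparr>carrier := H\<rparr>)"
    and "symmetric_gen_set G S"
    and "extraterrestrial (rcosets\<^bsub>G\<^esub> H) (schreier_adj G H S)"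
  shows "extraterrestrial_group G"
proof -
  note grp = assms(1) and sg = assms(3) and am = assms(4)
  interpret G: group G by (rule grp)
  have Hc: "H \<subseteq> carrier G" using sg by (rule subgroup.subset)
  have SC: "S \<subseteq> carrier G" and fS: "finite S" using assms(5) unfolding symmetric_gen_set_def by auto
  define proj where "proj x = H #>\<^bsub>G\<^esub> x" for x
  define rep where "rep C = (SOME x. x \<in> C)" for C :: "'a set"
  have rep: "rep C \<in> C" "rep C \<in> carrier G" "proj (rep C) = C" if C: "C \<in> rcosets\<^bsub>G\<^esub> H" for C
  proof -
    obtain g where g: "g \<in> carrier G" "C = H #>\<^bsub>G\<^esub> g" using rc_carrier(1)[OF grp sg C] by blast
    have "g \<in> C" using G.rcos_self[OF g(1) sg] g(2) by simp
    then show r: "rep C \<in> C" unfolding rep_def by (rule someI)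
    then show "rep C \<in> carrier G" using rc_carrier(2)[OF grp sg C] by blast
    show "proj (rep C) = C" unfolding proj_def using coset_facts(2)[OF grp sg C r] .
  qed
  have projH: "proj (h \<otimes>\<^bsub>G\<^esub> x) = proj x" if "x \<in> carrier G" "h \<in> H" for x h
    unfolding proj_def using coset_facts(1)[OF grp sg that] .
  have projR: "proj x \<in> rcosets\<^bsub>G\<^esub> H" if "x \<in> carrier G" for x
    unfolding proj_def using coset_facts(4)[OF grp sg that] .
  have projE: "schreier_adj G H S (proj x) (proj y)" if xy: "cayley_adj G S x y" for x y
  proof -
    obtain s where s: "s \<in> S" "y = x \<otimes>\<^bsub>G\<^esub> s" "x \<in> carrier G" "y \<in> carrier G"
      using xy unfolding cayley_adj_def by blast
    have "proj y = proj x #>\<^bsub>G\<^esub> s"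
      unfolding proj_def using s SC G.coset_mult_assoc[OF Hc, of x s] by auto
    then show ?thesis unfolding schreier_adj_def using projR s by blast
  qed
  show ?thesis
    unfolding extraterrestrial_group_def
  proof (intro exI conjI)
    show "symmetric_gen_set G S" by fact
    show "extraterrestrial (carrier G) (cayley_adj G S)"
      unfolding extraterrestrial_def
    proof
      fix m :: nat
      obtain k where hk: "\<forall>r. \<exists>U F Ob. is_UFO (rcosets\<^bsub>G\<^esub> H) (schreier_adj G H S) (2 * m) k r U F Ob"
        using assms(6) unfolding extraterrestrial_def by blast
      show "\<exists>k. \<forall>r. \<exists>U F Ob. is_UFO (carrier G) (cayley_adj G S) m k r U F Ob"
      proof (intro exI[of _ k] allI)
        fix r :: nat
        obtain U F Ob where UFO: "is_UFO (rcosets\<^bsub>G\<^esub> H) (schreier_adj G H S) (2 * m) k r U F Ob"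
          using hk by blast
        note U = UFO[unfolded is_UFO_def]
        have UR: "U \<subseteq> rcosets\<^bsub>G\<^esub> H" and FR: "F \<subseteq> rcosets\<^bsub>G\<^esub> H" and OR: "Ob \<subseteq> rcosets\<^bsub>G\<^esub> H"
          and fU: "finite U" and fF: "finite F" and fO: "finite Ob"
          and dUF: "U \<inter> F = {}" and dUO: "U \<inter> Ob = {}" and dFO: "F \<inter> Ob = {}" and Une: "U \<noteq> {}"
          and cUF: "card U \<ge> 2 * m * card F"
          using U by auto
        obtain \<mu> where \<mu>bij: "bij_betw \<mu> U Ob" and \<mu>d: "\<forall>u\<in>U. graph_dist_le (rcosets\<^bsub>G\<^esub> H) (schreier_adj G H S) u (\<mu> u) k"
          using U by blast
        have blockS: "\<forall>ps. is_path (rcosets\<^bsub>G\<^esub> H) (schreier_adj G H S) ps \<and> hd ps \<in> U \<and> last ps \<in> Ob \<longrightarrow>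
            set ps \<inter> F \<noteq> {} \<or> length ps - 1 \<ge> r"
          using U by blast
        define g where "g u = rep u" for u
        have gU: "g u \<in> carrier G" "proj (g u) = u" if "u \<in> rcosets\<^bsub>G\<^esub> H" for u
          unfolding g_def using rep that by auto
        define Po where "Po u y \<longleftrightarrow> (\<exists>ps. is_walk (carrier G) (cayley_adj G S) ps \<and> hd ps = g u \<and> last ps = y
            \<and> y \<in> \<mu> u \<and> length ps - 1 \<le> k)" for u y
        have exo: "\<exists>y. Po u y" if u: "u \<in> U" for u
        proof -
          obtain qs where qs: "is_walk (rcosets\<^bsub>G\<^esub> H) (schreier_adj G H S) qs" "hd qs = u" "last qs = \<mu> u"
            "length qs - 1 \<le> k"
            using \<mu>d u unfolding graph_dist_le_def by blast
          have "g u \<in> hd qs" using qs(2) rep(1) u UR unfolding g_def by blast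
          then obtain ps where "is_walk (carrier G) (cayley_adj G S) ps" "hd ps = g u" "last ps \<in> last qs"
            "length ps = length qs"
            using walk_lift[OF grp sg SC qs(1)] by blast
          then show ?thesis unfolding Po_def using qs by (intro exI[of _ "last ps"]) auto
        qed
        define ofn where "ofn u = (SOME y. Po u y)" for u
        have oP: "Po u (ofn u)" if "u \<in> U" for u
          unfolding ofn_def using exo[OF that] by (rule someI_ex)
        have oR: "ofn u \<in> carrier G" "proj (ofn u) = \<mu> u" if u: "u \<in> U" for u
        proof -
          have OO: "\<mu> u \<in> rcosets\<^bsub>G\<^esub> H" using \<mu>bij u OR unfolding bij_betw_def by blast
          have "ofn u \<in> \<mu> u" using oP[OF u] unfolding Po_def by blast
          then show "ofn u \<in> carrier G" "proj (ofn u) = \<mu> u"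
            using rc_carrier(2)[OF grp sg OO] coset_facts(2)[OF grp sg OO] unfolding proj_def by auto
        qed
        define K where "K = H \<inter> (\<lambda>((u, z), f). g u \<otimes>\<^bsub>G\<^esub> z \<otimes>\<^bsub>G\<^esub> inv\<^bsub>G\<^esub> (g f)) ` ((U \<times> Bn G S r) \<times> F)"
        have fK: "finite K"
        proof -
          have "finite ((U \<times> Bn G S r) \<times> F)" using fU fF Bn_finite[OF fS] by blast
          then show ?thesis unfolding K_def by blast
        qed
        obtain A where A: "finite A" "A \<noteq> {}" "A \<subseteq> H"
          and cAK: "card ((\<lambda>(a,k). a \<otimes>\<^bsub>G\<^esub> k) ` (A \<times> K)) < 2 * card A"
          using folner_right[OF grp sg am fK] unfolding K_def by blast
        define AK where "AK = (\<lambda>(a,k). a \<otimes>\<^bsub>G\<^esub> k) ` (A \<times> K)"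
        have AKH: "AK \<subseteq> H" unfolding AK_def K_def using A subgroup.m_closed[OF sg] by auto
        have fAK: "finite AK" unfolding AK_def using A fK by auto
        define \<phi>U where "\<phi>U = (\<lambda>(a, u). a \<otimes>\<^bsub>G\<^esub> g u)"
        define \<phi>O where "\<phi>O = (\<lambda>(a, u). a \<otimes>\<^bsub>G\<^esub> ofn u)"
        define Ut where "Ut = \<phi>U ` (A \<times> U)"
        define Ot where "Ot = \<phi>O ` (A \<times> U)"
        define Ft where "Ft = (\<lambda>(y, f). y \<otimes>\<^bsub>G\<^esub> g f) ` (AK \<times> F)"
        have Ac: "a \<in> carrier G" if "a \<in> A" for a using that A Hc by blast
        have projU: "proj (\<phi>U (a, u)) = u" "\<phi>U (a, u) \<in> carrier G" if au: "a \<in> A" "u \<in> U" for a u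
        proof -
          have uR: "u \<in> rcosets\<^bsub>G\<^esub> H" using au UR by blast
          have aH: "a \<in> H" "a \<in> carrier G" using au A Ac by auto
          have "proj (\<phi>U (a, u)) = proj (g u)" unfolding \<phi>U_def using projH[OF gU(1)[OF uR] aH(1)] by simp
          then show "proj (\<phi>U (a, u)) = u" using gU(2)[OF uR] by simp
          show "\<phi>U (a, u) \<in> carrier G" unfolding \<phi>U_def using gU(1)[OF uR] aH by simp
        qed
        have projO: "proj (\<phi>O (a, u)) = \<mu> u" "\<phi>O (a, u) \<in> carrier G" if au: "a \<in> A" "u \<in> U" for a u
        proof -
          have aH: "a \<in> H" "a \<in> carrier G" using au A Ac by auto
          have "proj (\<phi>O (a, u)) = proj (ofn u)" unfolding \<phi>O_def using projH[OF oR(1)[OF au(2)] aH(1)] by simp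
          then show "proj (\<phi>O (a, u)) = \<mu> u" using oR(2)[OF au(2)] by simp
          show "\<phi>O (a, u) \<in> carrier G" unfolding \<phi>O_def using oR(1)[OF au(2)] aH by simp
        qed
        have projF: "proj (y \<otimes>\<^bsub>G\<^esub> g f) = f" "y \<otimes>\<^bsub>G\<^esub> g f \<in> carrier G" if yf: "y \<in> AK" "f \<in> F" for y f
        proof -
          have fR: "f \<in> rcosets\<^bsub>G\<^esub> H" using yf FR by blast
          have yH: "y \<in> H" "y \<in> carrier G" using yf AKH Hc by auto
          have "proj (y \<otimes>\<^bsub>G\<^esub> g f) = proj (g f)" using projH[OF gU(1)[OF fR] yH(1)] by simp
          then show "proj (y \<otimes>\<^bsub>G\<^esub> g f) = f" using gU(2)[OF fR] by simp
          show "y \<otimes>\<^bsub>G\<^esub> g f \<in> carrier G" using gU(1)[OF fR] yH by simp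
        qed
        have injU: "inj_on \<phi>U (A \<times> U)"
        proof (rule inj_onI)
          fix p q assume p: "p \<in> A \<times> U" and q: "q \<in> A \<times> U" and e: "\<phi>U p = \<phi>U q"
          obtain a u a' u' where pq: "p = (a, u)" "q = (a', u')" by (cases p, cases q)
          have uu: "u = u'" using projU[of a u] projU[of a' u'] e p q pq by auto
          then have "a \<otimes>\<^bsub>G\<^esub> g u = a' \<otimes>\<^bsub>G\<^esub> g u" using e pq unfolding \<phi>U_def by simp
          then have "a = a'" using G.right_cancel[of "g u" a a'] gU p q pq UR Ac by auto
          then show "p = q" using pq uu by simp
        qed
        have injO: "inj_on \<phi>O (A \<times> U)"
        proof (rule inj_onI)
          fix p q assume p: "p \<in> A \<times> U" and q: "q \<in> A \<times> U" and e: "\<phi>O p = \<phi>O q"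
          obtain a u a' u' where pq: "p = (a, u)" "q = (a', u')" by (cases p, cases q)
          have "\<mu> u = \<mu> u'" using projO[of a u] projO[of a' u'] e p q pq by auto
          then have uu: "u = u'" using \<mu>bij p q pq unfolding bij_betw_def inj_on_def by auto
          then have "a \<otimes>\<^bsub>G\<^esub> ofn u = a' \<otimes>\<^bsub>G\<^esub> ofn u" using e pq unfolding \<phi>O_def by simp
          then have "a = a'" using G.right_cancel[of "ofn u" a a'] oR p q pq Ac by auto
          then show "p = q" using pq uu by simp
        qed
        have UtP: "\<exists>a u. a \<in> A \<and> u \<in> U \<and> x = \<phi>U (a, u)" if "x \<in> Ut" for x
          using that unfolding Ut_def by auto
        have OtP: "\<exists>a u. a \<in> A \<and> u \<in> U \<and> x = \<phi>O (a, u)" if "x \<in> Ot" for x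
          using that unfolding Ot_def by auto
        have FtP: "\<exists>y f. y \<in> AK \<and> f \<in> F \<and> x = y \<otimes>\<^bsub>G\<^esub> g f" if "x \<in> Ft" for x
          using that unfolding Ft_def by auto
        have UtC: "Ut \<subseteq> carrier G" using UtP projU by blast
        have OtC: "Ot \<subseteq> carrier G" using OtP projO by blast
        have FtC: "Ft \<subseteq> carrier G" using FtP projF by blast
        have projUt: "proj x \<in> U" if "x \<in> Ut" for x using UtP[OF that] projU by auto
        have projOt: "proj x \<in> Ob" if "x \<in> Ot" for x
          using OtP[OF that] projO \<mu>bij unfolding bij_betw_def by auto
        have projFt: "proj x \<in> F" if "x \<in> Ft" for x using FtP[OF that] projF by auto
        define \<mu>t where "\<mu>t = \<phi>O \<circ> inv_into (A \<times> U) \<phi>U"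
        have bijt: "bij_betw \<mu>t Ut Ot"
        proof -
          have b1: "bij_betw \<phi>U (A \<times> U) Ut" unfolding Ut_def using injU by (rule inj_on_imp_bij_betw)
          have b2: "bij_betw \<phi>O (A \<times> U) Ot" unfolding Ot_def using injO by (rule inj_on_imp_bij_betw)
          show ?thesis unfolding \<mu>t_def using bij_betw_trans[OF bij_betw_inv_into[OF b1] b2] .
        qed
        have distt: "\<forall>x\<in>Ut. graph_dist_le (carrier G) (cayley_adj G S) x (\<mu>t x) k"
        proof
          fix x assume "x \<in> Ut"
          then obtain a u where au: "a \<in> A" "u \<in> U" "x = \<phi>U (a, u)" using UtP by blast
          have "inv_into (A \<times> U) \<phi>U x = (a, u)" using au injU by (simp add: inv_into_f_f)
          then have mx: "\<mu>t x = a \<otimes>\<^bsub>G\<^esub> ofn u" unfolding \<mu>t_def \<phi>O_def by simp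
          obtain ps where ps: "is_walk (carrier G) (cayley_adj G S) ps" "hd ps = g u" "last ps = ofn u"
            "length ps - 1 \<le> k"
            using oP[OF au(2)] unfolding Po_def by blast
          have ac: "a \<in> carrier G" using Ac au by blast
          have w: "is_walk (carrier G) (cayley_adj G S) (map (\<lambda>y. a \<otimes>\<^bsub>G\<^esub> y) ps)"
          proof (rule walk_map[OF ps(1)])
            show "a \<otimes>\<^bsub>G\<^esub> y \<in> carrier G" if "y \<in> carrier G" for y using ac that by simp
            show "cayley_adj G S (a \<otimes>\<^bsub>G\<^esub> y) (a \<otimes>\<^bsub>G\<^esub> z)" if yz: "cayley_adj G S y z" for y z
            proof -
              obtain s where s: "s \<in> S" "z = y \<otimes>\<^bsub>G\<^esub> s" "y \<in> carrier G" "z \<in> carrier G"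
                using yz unfolding cayley_adj_def by blast
              have "a \<otimes>\<^bsub>G\<^esub> z = (a \<otimes>\<^bsub>G\<^esub> y) \<otimes>\<^bsub>G\<^esub> s" using s SC ac by (auto simp: G.m_assoc)
              moreover have "s \<in> carrier G" using s SC by blast
              ultimately show ?thesis unfolding cayley_adj_def using s ac by auto
            qed
          qed
          have ne: "ps \<noteq> []" using ps unfolding is_walk_def by simp
          show "graph_dist_le (carrier G) (cayley_adj G S) x (\<mu>t x) k"
            unfolding graph_dist_le_def
            using w ne ps au mx unfolding \<phi>U_def by (intro exI[of _ "map (\<lambda>y. a \<otimes>\<^bsub>G\<^esub> y) ps"]) (auto simp: hd_map last_map)
        qed
        have cardUt: "card Ut = card A * card U"
          unfolding Ut_def using card_image[OF injU] by (simp add: card_cartesian_product)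
        have cardFt: "card Ft \<le> card AK * card F"
        proof -
          have "card Ft \<le> card (AK \<times> F)" unfolding Ft_def using fAK fF by (intro card_image_le) simp
          then show ?thesis by (simp add: card_cartesian_product)
        qed
        have cnt: "card Ut \<ge> m * card Ft"
        proof -
          have "m * card Ft \<le> m * (card AK * card F)" using cardFt by simp
          also have "\<dots> \<le> m * (2 * card A * card F)"
          proof -
            have "card AK \<le> 2 * card A" using cAK unfolding AK_def[symmetric] by simp
            then have "card AK * card F \<le> 2 * card A * card F" by (rule mult_le_mono1)
            then show ?thesis by (rule mult_le_mono2)
          qed
          also have "\<dots> = card A * (2 * m * card F)" by (simp add: algebra_simps)
          also have "\<dots> \<le> card A * card U" using cUF by (rule mult_le_mono2)
          finally show ?thesis using cardUt by simp
        qed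
        have block: "set ps \<inter> Ft \<noteq> {} \<or> length ps - 1 \<ge> r"
          if ps: "is_path (carrier G) (cayley_adj G S) ps" "hd ps \<in> Ut" "last ps \<in> Ot" for ps
        proof (rule ccontr)
          assume "\<not> (set ps \<inter> Ft \<noteq> {} \<or> length ps - 1 \<ge> r)"
          then have avoid: "set ps \<inter> Ft = {}" and short: "length ps - 1 < r" by auto
          have w: "is_walk (carrier G) (cayley_adj G S) ps" using ps unfolding is_path_def by blast
          have ne: "ps \<noteq> []" using w unfolding is_walk_def by simp
          obtain a u where au: "a \<in> A" "u \<in> U" "hd ps = \<phi>U (a, u)" using UtP ps(2) by blast
          have ac: "a \<in> carrier G" using Ac au by blast
          have guc: "g u \<in> carrier G" using gU au UR by blast
          define qs where "qs = map proj ps"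
          have wq: "is_walk (rcosets\<^bsub>G\<^esub> H) (schreier_adj G H S) qs"
            unfolding qs_def using walk_map[OF w] projR projE by blast
          have qF: "set qs \<inter> F = {}"
          proof (rule ccontr)
            assume "set qs \<inter> F \<noteq> {}"
            then obtain f where f: "f \<in> set qs" "f \<in> F" by blast
            then obtain j where jj: "j < length qs" "qs ! j = f" by (auto simp: in_set_conv_nth)
            then have j: "j < length ps" "f \<in> F" "proj (ps ! j) = f" using f unfolding qs_def by auto
            obtain z where z: "z \<in> Bn G S j" "z \<in> carrier G" "ps ! j = hd ps \<otimes>\<^bsub>G\<^esub> z"
              using walk_word[OF grp SC w j(1)] by blast
            have "j \<le> r" using j(1) short by linarith
            then have zr: "z \<in> Bn G S r" using z(1) Bn_mono[of j r G S] by blast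
            have pjc: "ps ! j \<in> carrier G" using w j unfolding is_walk_def by auto
            have gfc: "g f \<in> carrier G" "proj (g f) = f" using gU j FR by auto
            have inH: "ps ! j \<otimes>\<^bsub>G\<^esub> inv\<^bsub>G\<^esub> (g f) \<in> H"
              using coset_facts(3)[OF grp sg pjc gfc(1)] j(3) gfc(2) unfolding proj_def by simp
            define \<kappa> where "\<kappa> = g u \<otimes>\<^bsub>G\<^esub> z \<otimes>\<^bsub>G\<^esub> inv\<^bsub>G\<^esub> (g f)"
            have \<kappa>c: "\<kappa> \<in> carrier G" unfolding \<kappa>_def using guc z gfc by simp
            have e1: "ps ! j \<otimes>\<^bsub>G\<^esub> inv\<^bsub>G\<^esub> (g f) = a \<otimes>\<^bsub>G\<^esub> \<kappa>"
              unfolding \<kappa>_def z(3) au(3) \<phi>U_def using ac guc z gfc by (simp add: G.m_assoc)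
            have aH: "a \<in> H" using au A by blast
            have "\<kappa> = inv\<^bsub>G\<^esub> a \<otimes>\<^bsub>G\<^esub> (a \<otimes>\<^bsub>G\<^esub> \<kappa>)" using ac \<kappa>c by (simp add: G.m_assoc[symmetric])
            moreover have "inv\<^bsub>G\<^esub> a \<otimes>\<^bsub>G\<^esub> (a \<otimes>\<^bsub>G\<^esub> \<kappa>) \<in> H"
            proof -
              have "a \<otimes>\<^bsub>G\<^esub> \<kappa> \<in> H" using inH e1 by simp
              moreover have "inv\<^bsub>G\<^esub> a \<in> H" using subgroup.m_inv_closed[OF sg aH] .
              ultimately show ?thesis using subgroup.m_closed[OF sg] by blast
            qed
            ultimately have \<kappa>H: "\<kappa> \<in> H" by simp
            have "\<kappa> \<in> (\<lambda>((u, z), f). g u \<otimes>\<^bsub>G\<^esub> z \<otimes>\<^bsub>G\<^esub> inv\<^bsub>G\<^esub> (g f)) ` ((U \<times> Bn G S r) \<times> F)"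
              by (rule image_eqI[where x="((u, z), f)"]) (simp_all add: \<kappa>_def au zr j)
            then have "\<kappa> \<in> K" unfolding K_def using \<kappa>H by blast
            then have aK: "a \<otimes>\<^bsub>G\<^esub> \<kappa> \<in> AK" unfolding AK_def
              by (intro image_eqI[where x="(a, \<kappa>)"]) (simp_all add: au)
            have "ps ! j = (a \<otimes>\<^bsub>G\<^esub> \<kappa>) \<otimes>\<^bsub>G\<^esub> g f"
            proof -
              have "(ps ! j \<otimes>\<^bsub>G\<^esub> inv\<^bsub>G\<^esub> (g f)) \<otimes>\<^bsub>G\<^esub> g f = ps ! j"
                using pjc gfc by (simp add: G.m_assoc)
              then show ?thesis using e1 by simp
            qed
            then have "ps ! j \<in> Ft" unfolding Ft_def
              by (intro image_eqI[where x="(a \<otimes>\<^bsub>G\<^esub> \<kappa>, f)"]) (simp_all add: aK j)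
            moreover have "ps ! j \<in> set ps" using j by simp
            ultimately show False using avoid by blast
          qed
          obtain qs' where qs': "is_path (rcosets\<^bsub>G\<^esub> H) (schreier_adj G H S) qs'" "hd qs' = hd qs"
            "last qs' = last qs" "set qs' \<subseteq> set qs" "length qs' \<le> length qs"
            using walk_to_path[OF wq] by blast
          have "hd qs = proj (hd ps)" unfolding qs_def using ne by (simp add: hd_map)
          then have hq: "hd qs' \<in> U" using qs'(2) projUt ps(2) by simp
          have "last qs = proj (last ps)" unfolding qs_def using ne by (simp add: last_map)
          then have lq: "last qs' \<in> Ob" using qs'(3) projOt ps(3) by simp
          have "set qs' \<inter> F \<noteq> {} \<or> length qs' - 1 \<ge> r" using blockS qs'(1) hq lq by blast
          moreover have "length qs = length ps" unfolding qs_def by simp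
          ultimately show False using qF qs'(4) qs'(5) short by auto
        qed
        have disj: "Ut \<inter> Ft = {}" "Ut \<inter> Ot = {}" "Ft \<inter> Ot = {}"
          using projUt projFt projOt dUF dUO dFO by blast+
        have fins: "finite Ut" "finite Ft" "finite Ot"
          unfolding Ut_def Ft_def Ot_def using A fU fF fAK by auto
        have Utne: "Ut \<noteq> {}" unfolding Ut_def using A Une by auto
        have "is_UFO (carrier G) (cayley_adj G S) m k r Ut Ft Ot"
          unfolding is_UFO_def
        proof (intro conjI)
          show "\<exists>\<mu>. bij_betw \<mu> Ut Ot \<and> (\<forall>u\<in>Ut. graph_dist_le (carrier G) (cayley_adj G S) u (\<mu> u) k)"
            using bijt distt by blast
          show "\<forall>ps. is_path (carrier G) (cayley_adj G S) ps \<and> hd ps \<in> Ut \<and> last ps \<in> Ot \<longrightarrow>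
            set ps \<inter> Ft \<noteq> {} \<or> length ps - 1 \<ge> r"
            using block by blast
        qed (fact UtC FtC OtC fins disj cnt Utne)+
        then show "\<exists>U F Ob. is_UFO (carrier G) (cayley_adj G S) m k r U F Ob" by blast
      qed
    qed
  qed
qed


end
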